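(* Let $\varphi$ be a basic existential or basic universal sentence of spread $m$ and range $r'$ over a graph language $L$, and let $C,M\notin L$ be distinct unary predicate symbols. Let $G$ be an $L$-interpretation with $G\models\varphi$, and let $\lambda$ be a layering of $\overline G$. Let $r\ge r'$ and $\ell>2r(3m+1)$ be integers. Then for all but at most $6rm$ of the $(\ell,r)$-covers of integers $R$, there exists an $m$-plan $p$ for $R$ such that for each $I\in R$, $$G[\lambda^{-1}(I)],\ C:=\lambda^{-1}(M_{2r}(I)),\ M:=\lambda^{-1}(M_r(I))\models\varphi^{(p(I))}.$$
   Context: A graph language $L$ consists of a binary predicate symbol $e$ and a finite set of unary predicate symbols. An $L$-interpretation $G$ consists of a graph $\overline G$ and a set $S_C\subseteq V(\overline G)$ for each unary $C\in L$; $e$ is interpreted as adjacency in $\overline G$. For $S\subseteq V(\overline G)$, $G[S]$ is the interpretation on $\overline G[S]$ with each unary predicate restricted to $S$; "$H, C:=A, M:=B$" denotes the expansion of $H$ with new unary predicates $C,M$ interpreted as $A,B$. A layering of a graph is a function $\lambda:V\to\mathbb Z$ with $|\lambda(u)-\lambda(v)|\le1$ on edges. $d(x,y)\le r$ abbreviates $(\exists z_0,\dots,z_r)\,z_0=x\land z_r=y\land\bigwedge_{i=1}^r(z_{i-1}=z_i\lor e(z_{i-1},z_i))$. An $r$-local formula is a formula $\psi$ with one free variable $x$ in which all quantifications are of the form $(\exists y: d(x,y)\le r)$ or $(\forall y: d(x,y)\le r)$. A basic existential sentence is one of the form $(\exists x_1,\dots,x_m)\bigwedge_{1\le i<j\le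 m}d(x_i,x_j)>2r\land\bigwedge_{i=1}^m\psi(x_i)$, and a basic universal sentence is one of the form $(\forall x_1,\dots,x_{m+1})\bigl(\bigwedge_{1\le i<j\le m+1}d(x_i,x_j)>2r\bigr)\Rightarrow\bigvee_{i=1}^{m+1}\psi(x_i)$, where in both cases $\psi$ is $r$-local; $m$ is the spread, $r$ the range and $\psi$ the core. For such $\varphi$ and an integer $k\ge0$, the $(C,M,k)$-variant $\varphi^{(k)}$ is $(\exists x_1,\dots,x_k)\bigwedge_{1\le i<j\le k}d(x_i,x_j)>2r\land\bigwedge_{i=1}^k(C(x_i)\land\psi(x_i))$ if $\varphi$ is basic existential, and $(\forall x_1,\dots,x_{k+1})\bigl(\bigwedge_{i=1}^{k+1}M(x_i)\land\bigwedge_{1\le i<j\le k+1}d(x_i,x_j)>2r\bigr)\Rightarrow\bigvee_{i=1}^{k+1}\psi(x_i)$ if $\varphi$ is basic universal. For integers $\ell\ge 2r+1$ and $n$, the set of all intervals $\{i,i+1,\dots,i+\ell-1\}$ with $i\equiv n\pmod{\ell-2r}$ is an $(\ell,r)$-cover of integers (there are exactly $\ell-2r$ distinct ones). For an integer $d\ge0$ and $I=\{i,\dots,i+\ell-1\}$ in a cover, $M_d(I)=\{i+d,\dots,i+\ell-d-1\}$. An $m$-plan for a cover $R$ is a function $p:R\to\mathbb Z_{\ge0}$ with $\sum_{I\in R}p(I)=m$. *)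

theory Defs
  imports Main
begin

text \<open>A graph language L is a finite set of unary predicate symbols (of type 'p);
  the binary symbol e is implicit.\<close>

record ('v, 'p) interp =
  verts :: "'v set"
  adj   :: "'v \<Rightarrow> 'v \<Rightarrow> bool"
  un    :: "'p \<Rightarrow> 'v set"

definition is_graph :: "('v, 'p) interp \<Rightarrow> bool" where
  "is_graph G \<longleftrightarrow> finite (verts G) \<and>
     (\<forall>u v. adj G u v \<longrightarrow> u \<in> verts G \<and> v \<in> verts G) \<and>
     (\<forall>u v. adj G u v \<longrightarrow> adj G v u) \<and>
     (\<forall>u. \<not> adj G u u)"

definition L_interp :: "'p set \<Rightarrow> ('v, 'p) interp \<Rightarrow> bool" where
  "L_interp L G \<longleftrightarrow> is_graph G \<and> (\<forall>C\<in>L. un G C \<subseteq> verts G)"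

definition restrict :: "('v, 'p) interp \<Rightarrow> 'v set \<Rightarrow> ('v, 'p) interp" where
  "restrict G S = \<lparr> verts = verts G \<inter> S,
                    adj = (\<lambda>u v. adj G u v \<and> u \<in> S \<and> v \<in> S),
                    un = (\<lambda>P. un G P \<inter> S) \<rparr>"

definition expand :: "('v, 'p) interp \<Rightarrow> 'p \<Rightarrow> 'v set \<Rightarrow> 'p \<Rightarrow> 'v set \<Rightarrow> ('v, 'p) interp" where
  "expand H C A M B = H \<lparr> un := (un H)(C := A, M := B) \<rparr>"

definition layering :: "('v, 'p) interp \<Rightarrow> ('v \<Rightarrow> int) \<Rightarrow> bool" where
  "layering G lam \<longleftrightarrow> (\<forall>u v. adj G u v \<longrightarrow> \<bar>lam u - lam v\<bar> \<le> 1)"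

definition dist_le :: "('v, 'p) interp \<Rightarrow> nat \<Rightarrow> 'v \<Rightarrow> 'v \<Rightarrow> bool" where
  "dist_le H k u w \<longleftrightarrow> (\<exists>zs. length zs = Suc k \<and> set zs \<subseteq> verts H \<and>
      zs ! 0 = u \<and> zs ! k = w \<and>
      (\<forall>i<k. zs ! i = zs ! Suc i \<or> adj H (zs ! i) (zs ! Suc i)))"

text \<open>Variables are natural numbers; variable 0 is the free
  variable x. LExB y \<psi> stands for (\<exists>y: d(x,y) \<le> r) \<psi>, LAllB y \<psi> for (\<forall>y: d(x,y) \<le> r) \<psi>,
  where r is the range the formula is evaluated with.\<close>

datatype 'p lfm =
    LTrue
  | LEq nat nat
  | LAdj nat nat
  | LPred 'p nat
  | LNot "'p lfm"
  | LAnd "'p lfm" "'p lfm"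
  | LOr "'p lfm" "'p lfm"
  | LExB nat "'p lfm"
  | LAllB nat "'p lfm"

fun fv :: "'p lfm \<Rightarrow> nat set" where
  "fv LTrue = {}"
| "fv (LEq i j) = {i, j}"
| "fv (LAdj i j) = {i, j}"
| "fv (LPred P i) = {i}"
| "fv (LNot f) = fv f"
| "fv (LAnd f g) = fv f \<union> fv g"
| "fv (LOr f g) = fv f \<union> fv g"
| "fv (LExB y f) = fv f - {y}"
| "fv (LAllB y f) = fv f - {y}"

fun preds :: "'p lfm \<Rightarrow> 'p set" where
  "preds LTrue = {}"
| "preds (LEq i j) = {}"
| "preds (LAdj i j) = {}"
| "preds (LPred P i) = {P}"
| "preds (LNot f) = preds f"
| "preds (LAnd f g) = preds f \<union> preds g"
| "preds (LOr f g) = preds f \<union> preds g"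
| "preds (LExB y f) = preds f"
| "preds (LAllB y f) = preds f"

fun bound_ok :: "'p lfm \<Rightarrow> bool" where
  "bound_ok (LNot f) = bound_ok f"
| "bound_ok (LAnd f g) = (bound_ok f \<and> bound_ok g)"
| "bound_ok (LOr f g) = (bound_ok f \<and> bound_ok g)"
| "bound_ok (LExB y f) = (y \<noteq> 0 \<and> bound_ok f)"
| "bound_ok (LAllB y f) = (y \<noteq> 0 \<and> bound_ok f)"
| "bound_ok _ = True"

definition local_fm :: "'p set \<Rightarrow> 'p lfm \<Rightarrow> bool" where
  "local_fm L f \<longleftrightarrow> fv f \<subseteq> {0} \<and> bound_ok f \<and> preds f \<subseteq> L"

fun leval :: "('v, 'p) interp \<Rightarrow> nat \<Rightarrow> 'p lfm \<Rightarrow> (nat \<Rightarrow> 'v) \<Rightarrow> bool" where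
  "leval H r LTrue a = True"
| "leval H r (LEq i j) a = (a i = a j)"
| "leval H r (LAdj i j) a = adj H (a i) (a j)"
| "leval H r (LPred P i) a = (a i \<in> un H P)"
| "leval H r (LNot f) a = (\<not> leval H r f a)"
| "leval H r (LAnd f g) a = (leval H r f a \<and> leval H r g a)"
| "leval H r (LOr f g) a = (leval H r f a \<or> leval H r g a)"
| "leval H r (LExB y f) a =
     (\<exists>w\<in>verts H. dist_le H r (a 0) w \<and> leval H r f (a(y := w)))"
| "leval H r (LAllB y f) a =
     (\<forall>w\<in>verts H. dist_le H r (a 0) w \<longrightarrow> leval H r f (a(y := w)))"

definition holds_at :: "('v, 'p) interp \<Rightarrow> nat \<Rightarrow> 'p lfm \<Rightarrow> 'v \<Rightarrow> bool" where
  "holds_at H r f v = leval H r f (\<lambda>_. v)"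

datatype 'p basic = BasicEx nat nat "'p lfm" | BasicAll nat nat "'p lfm"

fun spread :: "'p basic \<Rightarrow> nat" where
  "spread (BasicEx m r f) = m" | "spread (BasicAll m r f) = m"
fun brange :: "'p basic \<Rightarrow> nat" where
  "brange (BasicEx m r f) = r" | "brange (BasicAll m r f) = r"
fun core :: "'p basic \<Rightarrow> 'p lfm" where
  "core (BasicEx m r f) = f" | "core (BasicAll m r f) = f"

definition basic_over :: "'p set \<Rightarrow> 'p basic \<Rightarrow> bool" where
  "basic_over L \<phi> \<longleftrightarrow> local_fm L (core \<phi>)"

definition scattered :: "('v, 'p) interp \<Rightarrow> nat \<Rightarrow> 'v list \<Rightarrow> bool" where
  "scattered H r xs \<longleftrightarrow>
     (\<forall>i j. i < j \<and> j < length xs \<longrightarrow> \<not> dist_le H (2 * r) (xs ! i) (xs ! j))"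

fun sat :: "('v, 'p) interp \<Rightarrow> 'p basic \<Rightarrow> bool" where
  "sat H (BasicEx m r f) =
     (\<exists>xs. length xs = m \<and> set xs \<subseteq> verts H \<and> scattered H r xs \<and>
           (\<forall>i<m. holds_at H r f (xs ! i)))"
| "sat H (BasicAll m r f) =
     (\<forall>xs. length xs = Suc m \<and> set xs \<subseteq> verts H \<and> scattered H r xs \<longrightarrow>
           (\<exists>i<Suc m. holds_at H r f (xs ! i)))"

fun sat_variant :: "('v, 'p) interp \<Rightarrow> 'p \<Rightarrow> 'p \<Rightarrow> nat \<Rightarrow> 'p basic \<Rightarrow> bool" where
  "sat_variant H C M k (BasicEx m r f) =
     (\<exists>xs. length xs = k \<and> set xs \<subseteq> verts H \<and> scattered H r xs \<and>
           (\<forall>i<k. xs ! i \<in> un H C \<and> holds_at H r f (xs ! i)))"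
| "sat_variant H C M k (BasicAll m r f) =
     (\<forall>xs. length xs = Suc k \<and> set xs \<subseteq> verts H \<and>
           (\<forall>i<Suc k. xs ! i \<in> un H M) \<and> scattered H r xs \<longrightarrow>
           (\<exists>i<Suc k. holds_at H r f (xs ! i)))"

definition cover :: "nat \<Rightarrow> nat \<Rightarrow> int \<Rightarrow> int set set" where
  "cover l r n = {{i .. i + int l - 1} | i. i mod (int l - 2 * int r) = n mod (int l - 2 * int r)}"

definition covers :: "nat \<Rightarrow> nat \<Rightarrow> int set set set" where
  "covers l r = range (cover l r)"

definition mid :: "nat \<Rightarrow> int set \<Rightarrow> int set" where
  "mid d I = {Min I + int d .. Max I - int d}"

definition plan :: "int set set \<Rightarrow> (int set \<Rightarrow> nat) \<Rightarrow> nat \<Rightarrow> bool" where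
  "plan R p m \<longleftrightarrow> finite {I \<in> R. p I \<noteq> 0} \<and> (\<Sum>I\<in>{I \<in> R. p I \<noteq> 0}. p I) = m"

end

theory Submission
  imports Defs
begin

lemma dist_le_refl: "u \<in> verts H \<Longrightarrow> dist_le H k u u"
  unfolding dist_le_def by (rule exI[of _ "replicate (Suc k) u"]) (auto simp del: replicate.simps)

lemma dist_le_sym:
  assumes sym: "\<And>u v. adj H u v \<Longrightarrow> adj H v u" and d: "dist_le H k u v"
  shows "dist_le H k v u"
proof -
  from d obtain zs where z: "length zs = Suc k" "set zs \<subseteq> verts H" "zs!0 = u" "zs!k = v"
    and st: "\<forall>i<k. zs!i = zs!Suc i \<or> adj H (zs!i) (zs!Suc i)" unfolding dist_le_def by blast
  have "length (rev zs) = Suc k" "set (rev zs) \<subseteq> verts H" using z by auto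
  moreover have "rev zs ! 0 = v" using z by (simp add: rev_nth)
  moreover have "rev zs ! k = u" using z by (simp add: rev_nth)
  moreover have "\<forall>i<k. rev zs!i = rev zs!Suc i \<or> adj H (rev zs!i) (rev zs!Suc i)"
  proof (intro allI impI)
    fix i assume i: "i<k"
    define j where "j = k - Suc i"
    have j: "j < k" "Suc j = k - i" using i by (auto simp: j_def)
    have e1: "rev zs ! i = zs ! Suc j" using z i j by (simp add: rev_nth)
    have e2: "rev zs ! Suc i = zs ! j" using z i by (simp add: rev_nth j_def)
    show "rev zs!i = rev zs!Suc i \<or> adj H (rev zs!i) (rev zs!Suc i)"
      using st j(1) sym e1 e2 by metis
  qed
  ultimately show ?thesis unfolding dist_le_def by blast
qed

lemma path_lam:
  assumes lay: "layering G lam" and st: "\<forall>i<k. zs!i = zs!Suc i \<or> adj G (zs!i) (zs!Suc i)"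
  shows "j + d \<le> k \<Longrightarrow> \<bar>lam (zs!(j+d)) - lam (zs!j)\<bar> \<le> int d"
proof (induction d)
  case 0 then show ?case by simp
next
  case (Suc d)
  then have h: "\<bar>lam (zs!(j+d)) - lam (zs!j)\<bar> \<le> int d" by simp
  have jd: "j + d < k" using Suc.prems by simp
  have "\<bar>lam (zs!(j+d)) - lam (zs!Suc (j+d))\<bar> \<le> 1"
  proof (cases "zs!(j+d) = zs!Suc (j+d)")
    case True then show ?thesis by simp
  next
    case False then have "adj G (zs!(j+d)) (zs!Suc (j+d))" using st jd by blast
    then show ?thesis using lay unfolding layering_def by blast
  qed
  then show ?case using h by simp
qed

lemma dist_lam:
  assumes lay: "layering G lam" and d: "dist_le G k u v"
  shows "\<bar>lam u - lam v\<bar> \<le> int k"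
proof -
  from d obtain zs where z: "length zs = Suc k" "zs!0 = u" "zs!k = v"
    and st: "\<forall>i<k. zs!i = zs!Suc i \<or> adj G (zs!i) (zs!Suc i)" unfolding dist_le_def by blast
  have "\<bar>lam (zs!(0+k)) - lam (zs!0)\<bar> \<le> int k" using path_lam[OF lay st, of 0 k] by simp
  then show ?thesis using z by simp
qed

lemma verts_H [simp]: "verts (expand (restrict G S) C A M B) = verts G \<inter> S"
  by (simp add: expand_def restrict_def)
lemma adj_H [simp]: "adj (expand (restrict G S) C A M B) u v = (adj G u v \<and> u \<in> S \<and> v \<in> S)"
  by (simp add: expand_def restrict_def)
lemma un_H: "un (expand (restrict G S) C A M B) P = (if P = M then B else if P = C then A else un G P \<inter> S)"
  by (simp add: expand_def restrict_def)

lemma dist_H_G: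
  assumes "dist_le (expand (restrict G S) C A M B) k u v"
  shows "dist_le G k u v"
proof -
  from assms obtain zs where "length zs = Suc k" "set zs \<subseteq> verts G \<inter> S" "zs!0 = u" "zs!k = v"
    "\<forall>i<k. zs!i = zs!Suc i \<or> (adj G (zs!i) (zs!Suc i) \<and> zs!i \<in> S \<and> zs!Suc i \<in> S)"
    unfolding dist_le_def by auto
  then show ?thesis unfolding dist_le_def by (intro exI[of _ zs]) auto
qed

lemma dist_G_H:
  assumes lay: "layering G lam" and d: "dist_le G k u v" and kk: "k \<le> k1 + k2"
   and inI: "\<And>t. \<bar>t - lam u\<bar> \<le> int k1 \<or> \<bar>t - lam v\<bar> \<le> int k2 \<Longrightarrow> t \<in> I"
  shows "dist_le (expand (restrict G (lam -` I)) C A M B) k u v"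
proof -
  from d obtain zs where z: "length zs = Suc k" "set zs \<subseteq> verts G" "zs!0 = u" "zs!k = v"
    and st: "\<forall>i<k. zs!i = zs!Suc i \<or> adj G (zs!i) (zs!Suc i)" unfolding dist_le_def by blast
  have inS: "zs!j \<in> lam -` I" if jk: "j \<le> k" for j
  proof (cases "j \<le> k1")
    case True
    have "\<bar>lam (zs!(0+j)) - lam (zs!0)\<bar> \<le> int j" using path_lam[OF lay st, of 0 j] jk by simp
    then have "\<bar>lam (zs!j) - lam u\<bar> \<le> int k1" using True z by simp
    then show ?thesis using inI by simp
  next
    case False
    have "\<bar>lam (zs!(j+(k-j))) - lam (zs!j)\<bar> \<le> int (k-j)" using path_lam[OF lay st, of j "k-j"] jk by simp
    then have "\<bar>lam (zs!j) - lam v\<bar> \<le> int k2" using False kk z jk by simp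
    then show ?thesis using inI by simp
  qed
  have "set zs \<subseteq> lam -` I"
  proof
    fix x assume "x \<in> set zs"
    then obtain j where "j < length zs" "x = zs!j" by (auto simp: in_set_conv_nth)
    then show "x \<in> lam -` I" using inS z by simp
  qed
  then show ?thesis unfolding dist_le_def using z st inS
    by (intro exI[of _ zs]) auto
qed

lemma leval_transfer:
  assumes ball: "\<And>w. dist_le G r v w \<Longrightarrow> w \<in> S \<and> dist_le (expand (restrict G S) C A M B) r v w"
  shows "bound_ok f \<Longrightarrow> C \<notin> preds f \<Longrightarrow> M \<notin> preds f \<Longrightarrow> a 0 = v \<Longrightarrow> (\<forall>i. a i \<in> S)
     \<Longrightarrow> leval (expand (restrict G S) C A M B) r f a = leval G r f a"
proof (induction f arbitrary: a)
  case (LPred P i) then show ?case by (simp add: un_H)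
next
  case (LExB y f)
  show ?case
  proof
    assume "leval (expand (restrict G S) C A M B) r (LExB y f) a"
    then obtain w where w: "w \<in> verts G" "w \<in> S" "dist_le (expand (restrict G S) C A M B) r v w"
      "leval (expand (restrict G S) C A M B) r f (a(y:=w))" using LExB.prems by auto
    have "leval (expand (restrict G S) C A M B) r f (a(y:=w)) = leval G r f (a(y:=w))"
      by (rule LExB.IH) (use LExB.prems w in auto)
    then have "leval G r f (a(y:=w))" using w by simp
    moreover have "dist_le G r (a 0) w" using dist_H_G[OF w(3)] LExB.prems by simp
    ultimately show "leval G r (LExB y f) a" using w by auto
  next
    assume "leval G r (LExB y f) a"
    then obtain w where w: "w \<in> verts G" "dist_le G r v w" "leval G r f (a(y:=w))" using LExB.prems by auto
    have w2: "w \<in> S" "dist_le (expand (restrict G S) C A M B) r v w" using ball w by auto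
    have "leval (expand (restrict G S) C A M B) r f (a(y:=w)) = leval G r f (a(y:=w))"
      by (rule LExB.IH) (use LExB.prems w2 in auto)
    then have "leval (expand (restrict G S) C A M B) r f (a(y:=w))" using w by simp
    then show "leval (expand (restrict G S) C A M B) r (LExB y f) a" using w w2 LExB.prems by auto
  qed
next
  case (LAllB y f)
  show ?case
  proof
    assume h: "leval (expand (restrict G S) C A M B) r (LAllB y f) a"
    show "leval G r (LAllB y f) a"
    proof (simp only: leval.simps, intro ballI impI)
      fix w assume w: "w \<in> verts G" "dist_le G r (a 0) w"
      have w2: "w \<in> S" "dist_le (expand (restrict G S) C A M B) r v w" using ball w LAllB.prems by auto
      have "leval (expand (restrict G S) C A M B) r f (a(y:=w))" using h w w2 LAllB.prems by auto
      moreover have "leval (expand (restrict G S) C A M B) r f (a(y:=w)) = leval G r f (a(y:=w))"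
        by (rule LAllB.IH) (use LAllB.prems w2 in auto)
      ultimately show "leval G r f (a(y:=w))" by simp
    qed
  next
    assume h: "leval G r (LAllB y f) a"
    show "leval (expand (restrict G S) C A M B) r (LAllB y f) a"
    proof (simp only: leval.simps, intro ballI impI)
      fix w assume w0: "w \<in> verts (expand (restrict G S) C A M B)" and w1: "dist_le (expand (restrict G S) C A M B) r (a 0) w"
      have w: "w \<in> verts G \<and> w \<in> S" "dist_le (expand (restrict G S) C A M B) r (a 0) w" using w0 w1 by auto
      have "dist_le G r v w" using w dist_H_G LAllB.prems by metis
      then have "leval G r f (a(y:=w))" using h w LAllB.prems by auto
      moreover have "leval (expand (restrict G S) C A M B) r f (a(y:=w)) = leval G r f (a(y:=w))"
        by (rule LAllB.IH) (use LAllB.prems w in auto)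
      ultimately show "leval (expand (restrict G S) C A M B) r f (a(y:=w))" by simp
    qed
  qed
qed auto

lemma holds_transfer:
  assumes lay: "layering G lam" and v: "v \<in> verts G" and b: "bound_ok f" "C \<notin> preds f" "M \<notin> preds f"
   and inI0: "\<And>t. \<bar>t - lam v\<bar> \<le> int k \<Longrightarrow> t \<in> I"
  shows "holds_at (expand (restrict G (lam -` I)) C A M B) k f v = holds_at G k f v"
  unfolding holds_at_def
proof (rule leval_transfer[OF _ b])
  fix w assume d: "dist_le G k v w"
  have "\<bar>lam v - lam w\<bar> \<le> int k" using dist_lam[OF lay d] .
  then have "\<bar>lam w - lam v\<bar> \<le> int k" by (simp add: abs_minus_commute)
  then have "lam w \<in> I" by (rule inI0)
  then have lw: "w \<in> lam -` I" by simp
  moreover have "dist_le (expand (restrict G (lam -` I)) C A M B) k v w"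
    by (rule dist_G_H[OF lay d, of k 0]) (use inI0 lw in auto)
  ultimately show "w \<in> lam -` I \<and> dist_le (expand (restrict G (lam -` I)) C A M B) k v w" by blast
qed (use inI0 in auto)


definition sc_set :: "('v, 'p) interp \<Rightarrow> nat \<Rightarrow> 'v set \<Rightarrow> bool" where
  "sc_set H k S \<longleftrightarrow> (\<forall>u\<in>S. \<forall>v\<in>S. u \<noteq> v \<longrightarrow> \<not> dist_le H (2*k) u v)"

lemma scattered_from_set:
  assumes "distinct xs" "sc_set H k (set xs)"
  shows "scattered H k xs"
  unfolding scattered_def
proof (intro allI impI)
  fix i j assume ij: "i < j \<and> j < length xs"
  then have "xs!i \<noteq> xs!j" using assms(1) by (simp add: nth_eq_iff_index_eq)
  then show "\<not> dist_le H (2 * k) (xs ! i) (xs ! j)" using assms(2) ij unfolding sc_set_def by auto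
qed

lemma scattered_to_set:
  assumes sub: "set xs \<subseteq> verts H" and sym: "\<And>u v. adj H u v \<Longrightarrow> adj H v u" and sc: "scattered H k xs"
  shows "distinct xs \<and> sc_set H k (set xs)"
proof
  show "distinct xs" unfolding distinct_conv_nth
  proof (intro allI impI)
    fix i j assume ij: "i < length xs" "j < length xs" "i \<noteq> j"
    show "xs!i \<noteq> xs!j"
    proof
      assume e: "xs!i = xs!j"
      have "dist_le H (2*k) (xs!i) (xs!j)" using e dist_le_refl sub ij nth_mem by (metis subsetD)
      moreover have "dist_le H (2*k) (xs!j) (xs!i)" using e dist_le_refl sub ij nth_mem by (metis subsetD)
      ultimately show False using sc ij unfolding scattered_def by (metis linorder_neqE_nat)
    qed
  qed
  show "sc_set H k (set xs)" unfolding sc_set_def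
  proof (intro ballI impI)
    fix u v assume uv: "u \<in> set xs" "v \<in> set xs" "u \<noteq> v"
    then obtain i j where ij: "i < length xs" "j < length xs" "u = xs!i" "v = xs!j" by (auto simp: in_set_conv_nth)
    have "i \<noteq> j" using ij uv by auto
    show "\<not> dist_le H (2 * k) u v"
    proof (cases "i < j")
      case True then show ?thesis using sc ij unfolding scattered_def by auto
    next
      case False then have "j < i" using \<open>i \<noteq> j\<close> by simp
      then have "\<not> dist_le H (2 * k) v u" using sc ij unfolding scattered_def by auto
      then show ?thesis using dist_le_sym[OF sym] by blast
    qed
  qed
qed

lemma cover_cong: "n mod (int l - 2 * int r) = n' mod (int l - 2 * int r) \<Longrightarrow> cover l r n = cover l r n'"
  by (simp add: cover_def)

lemma cover_mem: "I \<in> cover l r n \<longleftrightarrow> (\<exists>i. I = {i..i + int l - 1} \<and> i mod (int l - 2 * int r) = n mod (int l - 2 * int r))"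
  by (auto simp: cover_def)

lemma mid_block: "l \<ge> 1 \<Longrightarrow> mid d {i..i + int l - 1} = {i + int d .. i + int l - 1 - int d}"
proof -
  assume "l \<ge> 1"
  then have "{i..i + int l - 1} \<noteq> {}" by simp
  moreover have "Min {i..i + int l - 1} = i" using \<open>l \<ge> 1\<close>
    by (intro Min_eqI) auto
  moreover have "Max {i..i + int l - 1} = i + int l - 1" using \<open>l \<ge> 1\<close>
    by (intro Max_eqI) auto
  ultimately show ?thesis by (simp add: mid_def)
qed

lemma same_block: "(q::int) > 0 \<Longrightarrow> i mod q = i' mod q \<Longrightarrow> \<bar>i - i'\<bar> < q \<Longrightarrow> i = i'"
proof (rule ccontr)
  assume a: "q > 0" "i mod q = i' mod q" "\<bar>i - i'\<bar> < q" "i \<noteq> i'"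
  then have "q dvd (i - i')" by (simp add: mod_eq_dvd_iff)
  then have "\<bar>q\<bar> \<le> \<bar>i - i'\<bar>" using a(4) by (intro dvd_imp_le_int) auto
  then show False using a by simp
qed

lemma window:
  fixes q r z n :: int
  assumes q: "q > 0" and nb: "\<forall>s\<in>{z - 3*r + 1..z + 3*r}. (s - r) mod q \<noteq> n mod q"
  shows "\<exists>i. i mod q = n mod q \<and> i + r \<le> z - 3*r \<and> z + 3*r \<le> i + q + r - 1"
proof -
  define x where "x = z - 4*r - n"
  define i where "i = n + q * (x div q)"
  have im: "i mod q = n mod q" by (simp add: i_def)
  obtain D E where DE: "D = q * (x div q)" "E = x mod q" by simp
  have dm: "D + E = x" using DE by simp
  have E: "0 \<le> E" "E < q" using q DE by auto
  have iD: "i = n + D" using DE i_def by simp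
  have i1: "i \<le> z - 4*r" "z - 4*r < i + q" using dm E iD x_def by linarith+
  have "z + 3*r \<le> i + q + r - 1"
  proof (rule ccontr)
    assume "\<not> ?thesis"
    then have "i + q + r \<in> {z - 3*r + 1..z + 3*r}" using i1 by auto
    moreover have "(i + q + r - r) mod q = n mod q" using im by simp
    ultimately show False using nb by blast
  qed
  then show ?thesis using im i1 by (intro exI[of _ i]) auto
qed

lemma fiber_plan:
  assumes fin: "finite X" and g: "\<And>x. x \<in> X \<Longrightarrow> g x \<in> R \<and> Q (g x) x"
    and u: "\<And>x I. x \<in> X \<Longrightarrow> I \<in> R \<Longrightarrow> Q I x \<Longrightarrow> I = g x"
  shows "{I \<in> R. card {x\<in>X. Q I x} \<noteq> 0} = g ` X" and "(\<Sum>I\<in>g ` X. card {x\<in>X. Q I x}) = card X"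
proof -
  show "{I \<in> R. card {x\<in>X. Q I x} \<noteq> 0} = g ` X"
  proof
    show "{I \<in> R. card {x\<in>X. Q I x} \<noteq> 0} \<subseteq> g ` X"
    proof
      fix I assume "I \<in> {I \<in> R. card {x\<in>X. Q I x} \<noteq> 0}"
      then have I: "I \<in> R" "card {x\<in>X. Q I x} \<noteq> 0" by auto
      then have "{x\<in>X. Q I x} \<noteq> {}" by (metis card.empty)
      then obtain x where "x \<in> X" "Q I x" by blast
      then show "I \<in> g ` X" using u I by blast
    qed
    show "g ` X \<subseteq> {I \<in> R. card {x\<in>X. Q I x} \<noteq> 0}"
    proof
      fix I assume "I \<in> g ` X"
      then obtain x where x: "x \<in> X" "I = g x" by auto
      then have "x \<in> {x\<in>X. Q I x}" using g by auto
      moreover have "finite {x\<in>X. Q I x}" using fin by simp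
      ultimately have "card {x\<in>X. Q I x} \<noteq> 0" by (metis card_0_eq empty_iff)
      then show "I \<in> {I \<in> R. card {x\<in>X. Q I x} \<noteq> 0}" using x g by auto
    qed
  qed
  have "(\<Sum>I\<in>g ` X. card {x\<in>X. Q I x}) = (\<Sum>I\<in>g ` X. card {x\<in>X. g x = I})"
  proof (rule sum.cong)
    fix I assume "I \<in> g ` X"
    then obtain x0 where "x0 \<in> X" "I = g x0" by auto
    then have "I \<in> R" using g by auto
    have "{x\<in>X. Q I x} = {x\<in>X. g x = I}"
    proof (intro Collect_cong conj_cong refl iffI)
      fix x assume "x \<in> X" "Q I x" then show "g x = I" using u \<open>I \<in> R\<close> by metis
    next
      fix x assume "x \<in> X" "g x = I" then show "Q I x" using g by metis
    qed
    then show "card {x\<in>X. Q I x} = card {x\<in>X. g x = I}" by simp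
  qed simp
  also have "\<dots> = card X"
    using sum.image_gen[OF fin, of "\<lambda>_. (1::nat)" g] by (simp only: card_eq_sum[symmetric])
  finally show "(\<Sum>I\<in>g ` X. card {x\<in>X. Q I x}) = card X" .
qed

lemma count_lemma:
  fixes lam :: "'v \<Rightarrow> int"
  assumes fin: "finite X" and cX: "card X \<le> m" and q: "int l - 2 * int r > 0"
    and good: "\<And>n. (\<forall>x\<in>X. \<exists>i. i mod (int l - 2 * int r) = n mod (int l - 2 * int r)
         \<and> i + int r \<le> lam x - 3*int r \<and> lam x + 3*int r \<le> i + (int l - 2 * int r) + int r - 1)
         \<Longrightarrow> Good (cover l r n)"
  shows "card {R \<in> covers l r. \<not> Good R} \<le> 6 * r * m"
proof -
  define W where "W x = (\<lambda>s. cover l r (s - int r)) ` {lam x - 3*int r + 1 .. lam x + 3*int r}" for x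
  have sub: "{R \<in> covers l r. \<not> Good R} \<subseteq> (\<Union>x\<in>X. W x)"
  proof
    fix R assume R: "R \<in> {R \<in> covers l r. \<not> Good R}"
    then obtain n where n: "R = cover l r n" by (auto simp: covers_def)
    show "R \<in> (\<Union>x\<in>X. W x)"
    proof (rule ccontr)
      assume nR: "R \<notin> (\<Union>x\<in>X. W x)"
      have "\<forall>x\<in>X. \<exists>i. i mod (int l - 2 * int r) = n mod (int l - 2 * int r)
         \<and> i + int r \<le> lam x - 3*int r \<and> lam x + 3*int r \<le> i + (int l - 2 * int r) + int r - 1"
      proof
        fix x assume x: "x \<in> X"
        show "\<exists>i. i mod (int l - 2 * int r) = n mod (int l - 2 * int r)
         \<and> i + int r \<le> lam x - 3*int r \<and> lam x + 3*int r \<le> i + (int l - 2 * int r) + int r - 1"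
        proof (rule window[OF q])
          show "\<forall>s\<in>{lam x - 3 * int r + 1..lam x + 3 * int r}. (s - int r) mod (int l - 2 * int r) \<noteq> n mod (int l - 2 * int r)"
          proof (intro ballI notI)
            fix s assume s: "s \<in> {lam x - 3 * int r + 1..lam x + 3 * int r}"
              and e: "(s - int r) mod (int l - 2 * int r) = n mod (int l - 2 * int r)"
            have "cover l r (s - int r) = R" using cover_cong[OF e] n by simp
            then have "R \<in> W x" using s unfolding W_def by force
            then show False using nR x by blast
          qed
        qed
      qed
      then have "Good R" using good n by simp
      then show False using R by simp
    qed
  qed
  have finW: "finite (W x)" for x unfolding W_def by simp
  have cW: "card (W x) \<le> 6 * r" for x
  proof -
    have "card (W x) \<le> card {lam x - 3*int r + 1 .. lam x + 3*int r}" unfolding W_def by (rule card_image_le) simp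
    also have "\<dots> = 6 * r" by simp
    finally show ?thesis .
  qed
  have "card {R \<in> covers l r. \<not> Good R} \<le> card (\<Union>x\<in>X. W x)"
    by (rule card_mono[OF _ sub]) (use fin finW in auto)
  also have "\<dots> \<le> (\<Sum>x\<in>X. card (W x))" by (rule card_UN_le[OF fin])
  also have "\<dots> \<le> (\<Sum>x\<in>X. 6 * r)" by (rule sum_mono) (rule cW)
  also have "\<dots> = card X * (6 * r)" by simp
  also have "\<dots> \<le> m * (6 * r)" using cX by simp
  finally show ?thesis by (simp add: mult.commute)
qed


lemma ex_case:
  fixes G :: "('v,'p) interp" and lam :: "'v \<Rightarrow> int"
  assumes CM: "C \<noteq> M" "C \<notin> preds f" "M \<notin> preds f" and bo: "bound_ok f"
   and gr: "is_graph G" and sat: "sat G (BasicEx m r' f)" and lay: "layering G lam" and rr: "r' \<le> r"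
   and q0: "int l - 2*int r > 0"
  shows "card {R \<in> covers l r. \<not> (\<exists>p. plan R p m \<and> (\<forall>I\<in>R. sat_variant
     (expand (restrict G (lam -` I)) C (lam -` mid (2 * r) I) M (lam -` mid r I)) C M (p I) (BasicEx m r' f)))}
     \<le> 6 * r * m"
proof -
  from sat obtain xs where xs: "length xs = m" "set xs \<subseteq> verts G" "scattered G r' xs"
    "\<forall>i<m. holds_at G r' f (xs!i)" by auto
  have symG: "\<And>u v. adj G u v \<Longrightarrow> adj G v u" using gr unfolding is_graph_def by blast
  have dx: "distinct xs" "sc_set G r' (set xs)" using scattered_to_set[OF xs(2) symG xs(3)] by auto
  have hx: "holds_at G r' f x" if "x \<in> set xs" for x
    using that xs(1,4) by (auto simp: in_set_conv_nth)
  define q where "q = int l - 2 * int r"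
  have q: "q > 0" using q0 by (simp add: q_def)
  have l1: "l \<ge> 1" using q0 by simp
  have ilq: "int l = q + 2*int r" by (simp add: q_def)
  show ?thesis
  proof (rule count_lemma[where X = "set xs" and lam = lam])
    show "finite (set xs)" by simp
    show "card (set xs) \<le> m" using distinct_card[OF dx(1)] xs(1) by simp
    show "int l - 2 * int r > 0" by (fact q0)
  next
    fix n assume win0: "\<forall>x\<in>set xs. \<exists>i. i mod (int l - 2 * int r) = n mod (int l - 2 * int r)
         \<and> i + int r \<le> lam x - 3*int r \<and> lam x + 3*int r \<le> i + (int l - 2 * int r) + int r - 1"
    have win: "\<forall>x\<in>set xs. \<exists>i. i mod q = n mod q
         \<and> i + int r \<le> lam x - 3*int r \<and> lam x + 3*int r \<le> i + q + int r - 1" using win0 unfolding q_def .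
    define R where "R = cover l r n"
    define blk where "blk x = (SOME i. i mod q = n mod q
         \<and> i + int r \<le> lam x - 3*int r \<and> lam x + 3*int r \<le> i + q + int r - 1)" for x
    have blk: "blk x mod q = n mod q \<and> blk x + int r \<le> lam x - 3*int r \<and> lam x + 3*int r \<le> blk x + q + int r - 1"
      if "x \<in> set xs" for x
      unfolding blk_def by (rule someI_ex) (use win that in blast)
    define g where "g x = {blk x .. blk x + int l - 1}" for x
    define p where "p I = card {x \<in> set xs. lam x \<in> mid (2*r) I}" for I
    have gR: "g x \<in> R \<and> lam x \<in> mid (2*r) (g x)" if "x \<in> set xs" for x
    proof
      show "g x \<in> R" unfolding R_def g_def cover_mem using blk[OF that] by (auto simp: q_def)
      show "lam x \<in> mid (2*r) (g x)" unfolding g_def mid_block[OF l1] using blk[OF that] ilq by auto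
    qed
    have gu: "I = g x" if x: "x \<in> set xs" and I: "I \<in> R" and lx: "lam x \<in> mid (2*r) I" for x I
    proof -
      obtain i where i: "I = {i..i + int l - 1}" "i mod q = n mod q"
        using I unfolding R_def cover_mem q_def by blast
      have "lam x \<in> {i + int (2*r) .. i + int l - 1 - int (2*r)}" using lx i mid_block[OF l1] by simp
      then have "\<bar>i - blk x\<bar> < q" using blk[OF x] ilq by auto
      then have "i = blk x" using same_block[OF q] i(2) blk[OF x] by auto
      then show ?thesis using i g_def by simp
    qed
    have supp: "{I \<in> R. p I \<noteq> 0} = g ` set xs" unfolding p_def
      by (rule fiber_plan(1)[of "set xs" g R "\<lambda>I x. lam x \<in> mid (2*r) I"]) (use gR gu in auto)
    have sm: "(\<Sum>I\<in>g ` set xs. p I) = card (set xs)" unfolding p_def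
      by (rule fiber_plan(2)[of "set xs" g R "\<lambda>I x. lam x \<in> mid (2*r) I"]) (use gR gu in auto)
    have plan: "plan R p m" unfolding plan_def supp using sm distinct_card[OF dx(1)] xs(1) by simp
    have sv: "sat_variant (expand (restrict G (lam -` I)) C (lam -` mid (2 * r) I) M (lam -` mid r I)) C M (p I) (BasicEx m r' f)"
      if I: "I \<in> R" for I
    proof -
      obtain i where i: "I = {i..i + int l - 1}" "i mod q = n mod q"
        using I unfolding R_def cover_mem q_def by blast
      have m2: "mid (2*r) I = {i + 2 * int r .. i + int l - 1 - 2 * int r}" using i mid_block[OF l1] by simp
      define ys where "ys = filter (\<lambda>x. lam x \<in> mid (2*r) I) xs"
      have sys: "set ys = {x \<in> set xs. lam x \<in> mid (2*r) I}" unfolding ys_def by auto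
      have dys: "distinct ys" unfolding ys_def using dx(1) by simp
      have len: "length ys = p I" unfolding p_def using distinct_card[OF dys] sys by simp
      let ?H = "expand (restrict G (lam -` I)) C (lam -` mid (2 * r) I) M (lam -` mid r I)"
      have sub: "set ys \<subseteq> verts ?H"
      proof
        fix y assume y: "y \<in> set ys"
        then have "y \<in> verts G" "lam y \<in> mid (2*r) I" using sys xs(2) by auto
        then show "y \<in> verts ?H" using m2 i(1) by auto
      qed
      have sc: "scattered ?H r' ys"
      proof (rule scattered_from_set[OF dys])
        show "sc_set ?H r' (set ys)" unfolding sc_set_def
        proof (intro ballI impI notI)
          fix u v assume uv: "u \<in> set ys" "v \<in> set ys" "u \<noteq> v" and d: "dist_le ?H (2 * r') u v"
          have "dist_le G (2*r') u v" using dist_H_G[OF d] .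
          then show False using dx(2) uv sys unfolding sc_set_def by auto
        qed
      qed
      have hold: "ys ! j \<in> un ?H C \<and> holds_at ?H r' f (ys ! j)" if j: "j < p I" for j
      proof -
        have y: "ys ! j \<in> set ys" using j len by simp
        then have y2: "ys!j \<in> set xs" "lam (ys!j) \<in> mid (2*r) I" using sys by auto
        have "ys ! j \<in> un ?H C" using y2 CM(1) by (simp add: un_H)
        moreover have "holds_at ?H r' f (ys ! j) = holds_at G r' f (ys ! j)"
        proof (rule holds_transfer[OF lay _ bo CM(2,3)])
          show "ys ! j \<in> verts G" using y2 xs(2) by auto
          fix t assume "\<bar>t - lam (ys ! j)\<bar> \<le> int r'"
          then show "t \<in> I" using y2(2) m2 rr i(1) by auto
        qed
        ultimately show ?thesis using hx y2 by simp
      qed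
      show ?thesis unfolding sat_variant.simps
        by (rule exI[of _ ys]) (use len sub sc hold in auto)
    qed
    show "\<exists>p. plan (cover l r n) p m \<and> (\<forall>I\<in>cover l r n. sat_variant
     (expand (restrict G (lam -` I)) C (lam -` mid (2 * r) I) M (lam -` mid r I)) C M (p I) (BasicEx m r' f))"
      using plan sv unfolding R_def by blast
  qed
qed


lemma all_case:
  fixes G :: "('v,'p) interp" and lam :: "'v \<Rightarrow> int"
  assumes CM: "C \<noteq> M" "C \<notin> preds f" "M \<notin> preds f" and bo: "bound_ok f"
   and gr: "is_graph G" and sat: "sat G (BasicAll m r' f)" and lay: "layering G lam" and rr: "r' \<le> r"
   and q0: "int l - 2*int r > 0"
  shows "card {R \<in> covers l r. \<not> (\<exists>p. plan R p m \<and> (\<forall>I\<in>R. sat_variant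
     (expand (restrict G (lam -` I)) C (lam -` mid (2 * r) I) M (lam -` mid r I)) C M (p I) (BasicAll m r' f)))}
     \<le> 6 * r * m"
proof -
  have symG: "\<And>u v. adj G u v \<Longrightarrow> adj G v u" using gr unfolding is_graph_def by blast
  have finV: "finite (verts G)" using gr unfolding is_graph_def by blast
  define Sets where "Sets = {S. S \<subseteq> verts G \<and> sc_set G r' S \<and> (\<forall>s\<in>S. \<not> holds_at G r' f s)}"
  have finS: "finite Sets"
  proof (rule finite_subset[of _ "Pow (verts G)"])
    show "Sets \<subseteq> Pow (verts G)" unfolding Sets_def by auto
  qed (use finV in simp)
  have eS: "{} \<in> Sets" unfolding Sets_def sc_set_def by simp
  define c0 where "c0 = Max (card ` Sets)"
  have "c0 \<in> card ` Sets" unfolding c0_def using finS eS by (intro Max_in) auto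
  then obtain X where X: "X \<in> Sets" "card X = c0" by auto
  have Xmax: "card Y \<le> card X" if "Y \<in> Sets" for Y
    using X(2) that finS unfolding c0_def by (simp add: Max_ge)
  have Xv: "X \<subseteq> verts G" and Xsc: "sc_set G r' X" and Xf: "\<And>x. x \<in> X \<Longrightarrow> \<not> holds_at G r' f x"
    using X(1) unfolding Sets_def by auto
  have finX: "finite X" using Xv finV finite_subset by blast
  have cX: "card X \<le> m"
  proof (rule ccontr)
    assume "\<not> card X \<le> m"
    then have "Suc m \<le> card X" by simp
    then obtain T where T: "T \<subseteq> X" "card T = Suc m" "finite T" by (rule obtain_subset_with_card_n)
    obtain ys where ys: "set ys = T" "distinct ys" using finite_distinct_list[OF T(3)] by blast
    have len: "length ys = Suc m" using distinct_card[OF ys(2)] ys(1) T(2) by simp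
    have "sc_set G r' (set ys)" using Xsc T(1) unfolding sc_set_def ys(1) by (meson subsetD)
    then have "scattered G r' ys" by (rule scattered_from_set[OF ys(2)])
    moreover have "set ys \<subseteq> verts G" using ys(1) T(1) Xv by auto
    moreover have sat': "\<forall>xs. length xs = Suc m \<and> set xs \<subseteq> verts G \<and> scattered G r' xs \<longrightarrow>
           (\<exists>i<Suc m. holds_at G r' f (xs ! i))" using sat by simp
    ultimately obtain j where "j < Suc m" "holds_at G r' f (ys!j)" using len by blast
    moreover have "ys!j \<in> set ys" using \<open>j < Suc m\<close> len by simp
    then have "ys!j \<in> X" using ys(1) T(1) by auto
    ultimately show False using Xf by blast
  qed
  have maxl: "\<exists>x\<in>X. dist_le G (2*r') x y" if y: "y \<in> verts G" "\<not> holds_at G r' f y" for y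
  proof (rule ccontr)
    assume nd: "\<not> (\<exists>x\<in>X. dist_le G (2*r') x y)"
    then have yX: "y \<notin> X" using dist_le_refl[OF y(1)] by blast
    have "insert y X \<in> Sets" unfolding Sets_def
    proof (intro CollectI conjI)
      show "insert y X \<subseteq> verts G" using Xv y by auto
      show "\<forall>s\<in>insert y X. \<not> holds_at G r' f s" using Xf y by auto
      show "sc_set G r' (insert y X)" unfolding sc_set_def
      proof (intro ballI impI)
        fix u v assume uv: "u \<in> insert y X" "v \<in> insert y X" "u \<noteq> v"
        show "\<not> dist_le G (2 * r') u v"
        proof (cases "u = y")
          case True then have "v \<in> X" using uv by auto
          then show ?thesis using nd True dist_le_sym[OF symG] by blast
        next
          case False
          then have "u \<in> X" using uv by auto
          show ?thesis
          proof (cases "v = y")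
            case True then show ?thesis using nd \<open>u \<in> X\<close> by blast
          next
            case False then show ?thesis using Xsc uv \<open>u \<in> X\<close> unfolding sc_set_def by auto
          qed
        qed
      qed
    qed
    then have "card (insert y X) \<le> card X" by (rule Xmax)
    then show False using yX finX by simp
  qed
  define q where "q = int l - 2 * int r"
  have q: "q > 0" using q0 by (simp add: q_def)
  have l1: "l \<ge> 1" using q0 by simp
  have ilq: "int l = q + 2*int r" by (simp add: q_def)
  show ?thesis
  proof (rule count_lemma[where X = X and lam = lam])
    show "finite X" by (fact finX)
    show "card X \<le> m" by (fact cX)
    show "int l - 2 * int r > 0" by (fact q0)
  next
    fix n assume win0: "\<forall>x\<in>X. \<exists>i. i mod (int l - 2 * int r) = n mod (int l - 2 * int r)
         \<and> i + int r \<le> lam x - 3*int r \<and> lam x + 3*int r \<le> i + (int l - 2 * int r) + int r - 1"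
    have win: "\<forall>x\<in>X. \<exists>i. i mod q = n mod q
         \<and> i + int r \<le> lam x - 3*int r \<and> lam x + 3*int r \<le> i + q + int r - 1" using win0 unfolding q_def .
    define R where "R = cover l r n"
    define blk where "blk x = (SOME i. i mod q = n mod q
         \<and> i + int r \<le> lam x - 3*int r \<and> lam x + 3*int r \<le> i + q + int r - 1)" for x
    have blk: "blk x mod q = n mod q \<and> blk x + int r \<le> lam x - 3*int r \<and> lam x + 3*int r \<le> blk x + q + int r - 1"
      if "x \<in> X" for x
      unfolding blk_def by (rule someI_ex) (use win that in blast)
    define g where "g x = {blk x .. blk x + int l - 1}" for x
    define c where "c I = card {x \<in> X. lam x \<in> mid r I}" for I
    have gR: "g x \<in> R \<and> lam x \<in> mid r (g x)" if "x \<in> X" for x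
    proof
      show "g x \<in> R" unfolding R_def g_def cover_mem using blk[OF that] by (auto simp: q_def)
      show "lam x \<in> mid r (g x)" unfolding g_def mid_block[OF l1] using blk[OF that] ilq by auto
    qed
    have gu: "I = g x" if x: "x \<in> X" and I: "I \<in> R" and lx: "lam x \<in> mid r I" for x I
    proof -
      obtain i where i: "I = {i..i + int l - 1}" "i mod q = n mod q"
        using I unfolding R_def cover_mem q_def by blast
      have "lam x \<in> {i + int r .. i + int l - 1 - int r}" using lx i mid_block[OF l1] by simp
      then have "\<bar>i - blk x\<bar> < q" using blk[OF x] ilq by auto
      then have "i = blk x" using same_block[OF q] i(2) blk[OF x] by auto
      then show ?thesis using i g_def by simp
    qed
    have supp: "{I \<in> R. c I \<noteq> 0} = g ` X" unfolding c_def
      by (rule fiber_plan(1)[of X g R "\<lambda>I x. lam x \<in> mid r I"]) (use gR gu finX in auto)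
    have sm: "(\<Sum>I\<in>g ` X. c I) = card X" unfolding c_def
      by (rule fiber_plan(2)[of X g R "\<lambda>I x. lam x \<in> mid r I"]) (use gR gu finX in auto)
    define I0 where "I0 = {n..n + int l - 1}"
    have I0: "I0 \<in> R" unfolding R_def I0_def cover_mem by blast
    define p where "p I = c I + (if I = I0 then m - card X else 0)" for I
    define F where "F = insert I0 (g ` X)"
    have FR: "F \<subseteq> R" unfolding F_def using I0 gR by auto
    have finF: "finite F" unfolding F_def using finX by simp
    have suppF: "{I \<in> R. p I \<noteq> 0} \<subseteq> F"
    proof
      fix I assume "I \<in> {I \<in> R. p I \<noteq> 0}"
      then have "I \<in> R" "c I \<noteq> 0 \<or> I = I0" unfolding p_def by (auto split: if_splits)
      then show "I \<in> F" using supp unfolding F_def by auto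
    qed
    have "(\<Sum>I\<in>{I \<in> R. p I \<noteq> 0}. p I) = (\<Sum>I\<in>F. p I)"
      by (rule sum.mono_neutral_left[OF finF suppF]) (use FR in auto)
    also have "\<dots> = (\<Sum>I\<in>F. c I) + (\<Sum>I\<in>F. (if I = I0 then m - card X else 0))"
      unfolding p_def by (rule sum.distrib)
    also have "(\<Sum>I\<in>F. (if I = I0 then m - card X else 0)) = m - card X"
      using finF by (simp add: F_def)
    also have "(\<Sum>I\<in>F. c I) = (\<Sum>I\<in>g ` X. c I)"
    proof (rule sum.mono_neutral_right[OF finF])
      show "g ` X \<subseteq> F" unfolding F_def by auto
      show "\<forall>i\<in>F - g ` X. c i = 0" using supp FR by blast
    qed
    finally have psum: "(\<Sum>I\<in>{I \<in> R. p I \<noteq> 0}. p I) = m" using sm cX by simp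
    have plan: "plan R p m" unfolding plan_def using psum finite_subset[OF suppF finF] by simp
    have sv: "sat_variant (expand (restrict G (lam -` I)) C (lam -` mid (2 * r) I) M (lam -` mid r I)) C M (p I) (BasicAll m r' f)"
      if I: "I \<in> R" for I
    proof -
      obtain i where i: "I = {i..i + int l - 1}" "i mod q = n mod q"
        using I unfolding R_def cover_mem q_def by blast
      have mr: "mid r I = {i + int r .. i + int l - 1 - int r}" using i mid_block[OF l1] by simp
      let ?H = "expand (restrict G (lam -` I)) C (lam -` mid (2 * r) I) M (lam -` mid r I)"
      have symH: "\<And>u v. adj ?H u v \<Longrightarrow> adj ?H v u" using symG by simp
      have inI: "t \<in> I" if "lam u \<in> mid r I" "\<bar>t - lam u\<bar> \<le> int r'" for t u
        using that mr rr i(1) by auto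
      show ?thesis unfolding sat_variant.simps
      proof (intro allI impI, elim conjE)
        fix ys assume A1: "length ys = Suc (p I)" and A2: "set ys \<subseteq> verts ?H"
          and A3: "\<forall>j<Suc (p I). ys ! j \<in> un ?H M" and A4: "scattered ?H r' ys"
        show "\<exists>j<Suc (p I). holds_at ?H r' f (ys ! j)"
        proof (rule ccontr)
          assume nh: "\<not> (\<exists>j<Suc (p I). holds_at ?H r' f (ys ! j))"
          define Y where "Y = set ys"
          have Yv: "Y \<subseteq> verts G" using A2 unfolding Y_def by auto
          have Yl: "lam y \<in> mid r I" if "y \<in> Y" for y
          proof -
            from that[unfolded Y_def in_set_conv_nth] obtain j where j: "j < length ys" "ys!j = y" by blast
            have "ys!j \<in> un ?H M" using A3 j(1) A1 by simp
            then show ?thesis using j(2) by (simp add: un_H)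
          qed
          have Yf: "\<not> holds_at G r' f y" if "y \<in> Y" for y
          proof -
            from that[unfolded Y_def in_set_conv_nth] obtain j where j: "j < length ys" "ys!j = y" by blast
            have "holds_at ?H r' f y = holds_at G r' f y"
              by (rule holds_transfer[OF lay _ bo CM(2,3)]) (use Yv that inI Yl in auto)
            moreover have "\<not> holds_at ?H r' f (ys ! j)" using nh j(1) A1 by auto
            ultimately show ?thesis using j(2) by simp
          qed
          have dY: "distinct ys" "sc_set ?H r' Y" using scattered_to_set[OF A2 symH A4] unfolding Y_def by auto
          have Ysc: "sc_set G r' Y" unfolding sc_set_def
          proof (intro ballI impI notI)
            fix u v assume uv: "u \<in> Y" "v \<in> Y" "u \<noteq> v" and d: "dist_le G (2 * r') u v"
            have "dist_le ?H (2 * r') u v"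
              by (rule dist_G_H[OF lay d, of r' r']) (use inI Yl uv in auto)
            then show False using dY(2) uv unfolding sc_set_def by auto
          qed
          have cY: "card Y = Suc (p I)" using distinct_card[OF dY(1)] A1 unfolding Y_def by simp
          define X' where "X' = {x \<in> X. lam x \<notin> mid r I}"
          have cross: "\<not> dist_le G (2*r') y x" if y: "y \<in> Y" and x: "x \<in> X'" for y x
          proof
            assume d: "dist_le G (2*r') y x"
            obtain x0 where x0: "x0 \<in> X" "dist_le G (2*r') x0 y" using maxl[of y] Yv y Yf by auto
            have a1: "\<bar>lam x0 - lam y\<bar> \<le> 2 * int r'" using dist_lam[OF lay x0(2)] by simp
            have a2: "\<bar>lam y - lam x\<bar> \<le> 2 * int r'" using dist_lam[OF lay d] by simp
            have ly: "lam y \<in> {i + int r .. i + int l - 1 - int r}" using Yl[OF y] mr by simp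
            have b0: "blk x0 mod q = n mod q \<and> blk x0 + int r \<le> lam x0 - 3*int r \<and> lam x0 + 3*int r \<le> blk x0 + q + int r - 1"
              using blk[OF x0(1)] .
            have "\<bar>i - blk x0\<bar> < q" using b0 ly a1 rr ilq by auto
            then have ib: "i = blk x0" using same_block[OF q] i(2) b0 by auto
            have ly2: "i + 2 * int r \<le> lam y" "lam y \<le> i + q - 1" using b0 a1 rr ib by auto
            have xX: "x \<in> X" "lam x \<notin> mid r I" using x unfolding X'_def by auto
            have bx: "blk x mod q = n mod q \<and> blk x + int r \<le> lam x - 3*int r \<and> lam x + 3*int r \<le> blk x + q + int r - 1"
              using blk[OF xX(1)] .
            have "blk x \<noteq> i" using bx xX(2) mr ilq by auto
            then have "\<not> \<bar>blk x - i\<bar> < q" using same_block[OF q, of "blk x" i] bx i(2) by auto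
            then show False using bx ly2 a2 rr by auto
          qed
          define Z where "Z = Y \<union> X'"
          have "Z \<in> Sets" unfolding Sets_def
          proof (intro CollectI conjI)
            show "Z \<subseteq> verts G" using Yv Xv unfolding Z_def X'_def by auto
            show "\<forall>s\<in>Z. \<not> holds_at G r' f s" using Yf Xf unfolding Z_def X'_def by auto
            show "sc_set G r' Z" unfolding sc_set_def
            proof (intro ballI impI)
              fix u v assume uv: "u \<in> Z" "v \<in> Z" "u \<noteq> v"
              show "\<not> dist_le G (2 * r') u v"
              proof (cases "u \<in> Y")
                case uY: True
                show ?thesis
                proof (cases "v \<in> Y")
                  case True then show ?thesis using Ysc uY uv unfolding sc_set_def by auto
                next
                  case False then have "v \<in> X'" using uv unfolding Z_def by auto
                  then show ?thesis using cross[OF uY] by simp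
                qed
              next
                case uY: False
                then have uX: "u \<in> X'" using uv unfolding Z_def by auto
                show ?thesis
                proof (cases "v \<in> Y")
                  case True then show ?thesis using cross[OF True uX] dist_le_sym[OF symG, of "2*r'" u v] by auto
                next
                  case False then have "v \<in> X'" using uv unfolding Z_def by auto
                  then show ?thesis using Xsc uX uv unfolding sc_set_def X'_def by auto
                qed
              qed
            qed
          qed
          then have le: "card Z \<le> card X" by (rule Xmax)
          have finY: "finite Y" unfolding Y_def by simp
          have finX': "finite X'" unfolding X'_def using finX by simp
          have "Y \<inter> X' = {}" using Yl unfolding X'_def by auto
          then have cZ: "card Z = card Y + card X'" unfolding Z_def using card_Un_disjoint finY finX' by blast
          have XU: "X = {x \<in> X. lam x \<in> mid r I} \<union> X'" unfolding X'_def by auto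
          have "card ({x \<in> X. lam x \<in> mid r I} \<union> X') = card {x \<in> X. lam x \<in> mid r I} + card X'"
            by (rule card_Un_disjoint) (use finX finX' in \<open>auto simp: X'_def\<close>)
          then have "card X = c I + card X'" unfolding c_def using XU by simp
          moreover have "c I \<le> p I" unfolding p_def by simp
          ultimately show False using le cZ cY by simp
        qed
      qed
    qed
    show "\<exists>p. plan (cover l r n) p m \<and> (\<forall>I\<in>cover l r n. sat_variant
     (expand (restrict G (lam -` I)) C (lam -` mid (2 * r) I) M (lam -` mid r I)) C M (p I) (BasicAll m r' f))"
      using plan sv unfolding R_def by blast
  qed
qed


theorem mainTheorem14:
  fixes L :: "'p set" and C M :: 'p and \<phi> :: "'p basic"
    and G :: "('v, 'p) interp" and lam :: "'v \<Rightarrow> int" and r l :: nat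
  assumes "finite L" and "C \<notin> L" and "M \<notin> L" and "C \<noteq> M"
    and "basic_over L \<phi>"
    and "L_interp L G" and "sat G \<phi>" and "layering G lam"
    and "brange \<phi> \<le> r" and "int l > 2 * int r * (3 * int (spread \<phi>) + 1)"
  shows "card {R \<in> covers l r.
            \<not> (\<exists>p. plan R p (spread \<phi>) \<and>
                 (\<forall>I\<in>R. sat_variant
                          (expand (restrict G (lam -` I)) C (lam -` mid (2 * r) I) M (lam -` mid r I))
                          C M (p I) \<phi>))}
         \<le> 6 * r * spread \<phi>"
proof -
  have lf: "bound_ok (core \<phi>)" "preds (core \<phi>) \<subseteq> L" using assms(5) unfolding basic_over_def local_fm_def by auto
  have CM: "C \<notin> preds (core \<phi>)" "M \<notin> preds (core \<phi>)" using lf assms(2,3) by auto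
  have gr: "is_graph G" using assms(6) unfolding L_interp_def by blast
  have "2 * int r \<le> 2 * int r * (3 * int (spread \<phi>) + 1)"
  proof -
    have "0 \<le> 2 * int r * (3 * int (spread \<phi>))" by simp
    then show ?thesis by (simp add: algebra_simps)
  qed
  then have q0: "int l - 2 * int r > 0" using assms(10) by linarith
  show ?thesis
  proof (cases \<phi>)
    case (BasicEx m r' f)
    show ?thesis using ex_case[OF assms(4), of f G m r' lam r l] CM lf gr assms(7,8,9) q0 unfolding BasicEx by simp
  next
    case (BasicAll m r' f)
    show ?thesis using all_case[OF assms(4), of f G m r' lam r l] CM lf gr assms(7,8,9) q0 unfolding BasicAll by simp
  qed
qed

end
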